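(* Let $G = (V,E)$ be an $n$-vertex graph. Then there exists a set $A \subseteq V$ such that $G[A]$ is $\frac{n}{5\alpha(G)}$-connected.
   Context: $\alpha(G)$ denotes the independence number of $G$. A graph is $k$-connected if it has more than $k$ vertices and remains connected after deleting any fewer than $k$ vertices. *)

theory Defs
  imports Complex_Main
begin

definition simple_graph :: "'a set \<Rightarrow> ('a \<Rightarrow> 'a \<Rightarrow> bool) \<Rightarrow> bool" where
  "simple_graph V E \<longleftrightarrow> finite V \<and>
     (\<forall>u v. E u v \<longrightarrow> u \<in> V \<and> v \<in> V \<and> u \<noteq> v \<and> E v u)"

definition independent_set :: "'a set \<Rightarrow> ('a \<Rightarrow> 'a \<Rightarrow> bool) \<Rightarrow> 'a set \<Rightarrow> bool" where
  "independent_set V E S \<longleftrightarrow> S \<subseteq> V \<and> (\<forall>u\<in>S. \<forall>v\<in>S. \<not> E u v)"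

definition independence_number :: "'a set \<Rightarrow> ('a \<Rightarrow> 'a \<Rightarrow> bool) \<Rightarrow> nat" where
  "independence_number V E = Max {card S | S. independent_set V E S}"

definition induced_connected :: "('a \<Rightarrow> 'a \<Rightarrow> bool) \<Rightarrow> 'a set \<Rightarrow> bool" where
  "induced_connected E S \<longleftrightarrow>
     (\<forall>u\<in>S. \<forall>v\<in>S. (\<lambda>x y. x \<in> S \<and> y \<in> S \<and> E x y)\<^sup>*\<^sup>* u v)"

definition induced_k_connected :: "('a \<Rightarrow> 'a \<Rightarrow> bool) \<Rightarrow> 'a set \<Rightarrow> real \<Rightarrow> bool" where
  "induced_k_connected E A k \<longleftrightarrow> real (card A) > k \<and>
     (\<forall>X. X \<subseteq> A \<longrightarrow> real (card X) < k \<longrightarrow> induced_connected E (A - X))"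

end

theory Submission
  imports Defs
begin

lemma indep_fin:
  assumes "finite S"
  shows "finite {card I | I. independent_set S E I}"
        "{card I | I. independent_set S E I} \<noteq> {}"
proof -
  have "{card I | I. independent_set S E I} \<subseteq> {..card S}"
    using assms by (auto simp: independent_set_def intro: card_mono)
  then show "finite {card I | I. independent_set S E I}"
    using finite_subset by blast
  have "independent_set S E {}" by (simp add: independent_set_def)
  then show "{card I | I. independent_set S E I} \<noteq> {}" by blast
qed

lemma indep_max:
  assumes "finite S"
  shows "\<exists>I. independent_set S E I \<and> card I = independence_number S E"
proof -
  have "independence_number S E \<in> {card I | I. independent_set S E I}"
    unfolding independence_number_def using indep_fin[OF assms] by (rule Max_in)
  then show ?thesis by auto
qed

lemma indep_le:
  assumes "finite S" "independent_set S E I"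
  shows "card I \<le> independence_number S E"
  unfolding independence_number_def
  using indep_fin[OF assms(1)] assms(2) by (intro Max_ge) auto

lemma indep_pos:
  assumes "simple_graph V E" "S \<subseteq> V" "S \<noteq> {}"
  shows "1 \<le> independence_number S E"
proof -
  obtain x where x: "x \<in> S" using assms(3) by blast
  have fin: "finite S" using assms(1,2) finite_subset unfolding simple_graph_def by blast
  have "independent_set S E {x}"
    using assms(1) x unfolding simple_graph_def independent_set_def by auto
  from indep_le[OF fin this] show ?thesis by simp
qed

lemma indep_split:
  assumes "finite S" "C \<subseteq> S" "D \<subseteq> S" "C \<inter> D = {}"
    and noedge: "\<And>x y. x \<in> C \<Longrightarrow> y \<in> D \<Longrightarrow> \<not> E x y \<and> \<not> E y x"
  shows "independence_number C E + independence_number D E \<le> independence_number S E"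
proof -
  have fC: "finite C" and fD: "finite D" using assms finite_subset by blast+
  obtain I where I: "independent_set C E I" "card I = independence_number C E"
    using indep_max[OF fC] by blast
  obtain J where J: "independent_set D E J" "card J = independence_number D E"
    using indep_max[OF fD] by blast
  have IJ: "I \<subseteq> C" "J \<subseteq> D" using I J by (auto simp: independent_set_def)
  have "independent_set S E (I \<union> J)"
    using I(1) J(1) IJ assms(2,3) noedge unfolding independent_set_def by blast
  then have "card (I \<union> J) \<le> independence_number S E" by (rule indep_le[OF assms(1)])
  moreover have "card (I \<union> J) = card I + card J"
    using IJ assms(4) fC fD finite_subset by (intro card_Un_disjoint) blast+
  ultimately show ?thesis using I J by simp
qed

theorem mainTheorem5:
  fixes V :: "'a set" and E :: "'a \<Rightarrow> 'a \<Rightarrow> bool" and n :: nat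
  assumes "simple_graph V E" and "card V = n" and "V \<noteq> {}"
  shows "\<exists>A \<subseteq> V. induced_k_connected E A
           (real n / (5 * real (independence_number V E)))"
proof -
  define k where "k = real n / (5 * real (independence_number V E))"
  define al where "al = (\<lambda>S. real (independence_number S E))"
  have finV: "finite V" using assms(1) unfolding simple_graph_def by blast
  have aV: "al V \<ge> 1" using indep_pos[OF assms(1) _ assms(3)] unfolding al_def by simp
  have "n > 0" using assms(2,3) finV card_gt_0_iff by metis
  then have npos: "real n > 0" by simp
  have kpos: "k > 0" unfolding k_def using aV npos unfolding al_def by simp
  have k2: "2 * k * al V = 2 * real n / 5" unfolding k_def al_def using aV unfolding al_def by simp
  define P where "P = (\<lambda>S. S \<subseteq> V \<and> S \<noteq> {} \<and> real (card S) - 2 * k * al S > - k)"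
  have PV: "P V" unfolding P_def using assms k2 kpos npos by simp
  obtain S where PS: "P S" and minS: "\<And>S'. P S' \<Longrightarrow> card S \<le> card S'"
    using ex_has_least_nat[of P V card] PV by blast
  have SV: "S \<subseteq> V" and Sne: "S \<noteq> {}" and phiS: "real (card S) - 2 * k * al S > - k"
    using PS unfolding P_def by auto
  have finS: "finite S" using SV finV finite_subset by blast
  have sub: "real (card T) - 2 * k * al T \<le> - k" if "T \<subset> S" "T \<noteq> {}" for T
  proof (rule ccontr)
    assume "\<not> ?thesis"
    then have "P T" unfolding P_def using that SV by auto
    with minS have "card S \<le> card T" by blast
    moreover have "card T < card S" using that finS by (simp add: psubset_card_mono)
    ultimately show False by simp
  qed
  have aS: "al S \<ge> 1" using indep_pos[OF assms(1) SV Sne] unfolding al_def by simp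
  have "real (card S) > k"
  proof -
    have "2 * k * al S \<ge> 2 * k" using aS kpos by simp
    then show ?thesis using phiS by linarith
  qed
  moreover have "induced_connected E (S - X)" if XS: "X \<subseteq> S" and Xk: "real (card X) < k" for X
    unfolding induced_connected_def
  proof (intro ballI, rule ccontr)
    fix u v assume u: "u \<in> S - X" and v: "v \<in> S - X"
    define R where "R = (\<lambda>x y. x \<in> S - X \<and> y \<in> S - X \<and> E x y)"
    assume nc: "\<not> R\<^sup>*\<^sup>* u v"
    define C where "C = {w \<in> S - X. R\<^sup>*\<^sup>* u w}"
    define D where "D = S - X - C"
    have uC: "u \<in> C" using u unfolding C_def by simp
    have vD: "v \<in> D" using v nc unfolding D_def C_def by simp
    have noedge: "\<not> E x y \<and> \<not> E y x" if "x \<in> C" "y \<in> D" for x y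
    proof
      show "\<not> E x y"
      proof
        assume "E x y"
        then have "R x y" unfolding R_def using that unfolding C_def D_def by auto
        moreover have "R\<^sup>*\<^sup>* u x" using that unfolding C_def by simp
        ultimately have "R\<^sup>*\<^sup>* u y" by (rule rtranclp.rtrancl_into_rtrancl[rotated])
        then show False using that unfolding C_def D_def by auto
      qed
      show "\<not> E y x"
      proof
        assume "E y x"
        then have "E x y" using assms(1) unfolding simple_graph_def by blast
        then have "R x y" unfolding R_def using that unfolding C_def D_def by auto
        moreover have "R\<^sup>*\<^sup>* u x" using that unfolding C_def by simp
        ultimately have "R\<^sup>*\<^sup>* u y" by (rule rtranclp.rtrancl_into_rtrancl[rotated])
        then show False using that unfolding C_def D_def by auto
      qed
    qed
    have CS: "C \<subset> S" using vD uC unfolding C_def D_def by auto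
    have DS: "D \<subset> S" using vD uC unfolding C_def D_def by auto
    have phC: "real (card C) - 2 * k * al C \<le> - k" using sub[OF CS] uC by blast
    have phD: "real (card D) - 2 * k * al D \<le> - k" using sub[OF DS] vD by blast
    have alsplit: "al C + al D \<le> al S"
    proof -
      have "C \<inter> D = {}" unfolding D_def by auto
      then have "independence_number C E + independence_number D E \<le> independence_number S E"
        using indep_split[OF finS, of C D E] CS DS noedge by blast
      then show ?thesis unfolding al_def by (metis of_nat_add of_nat_le_iff)
    qed
    have cardS: "card S = card C + card D + card X"
    proof -
      have "S = (C \<union> D) \<union> X" using XS unfolding C_def D_def by auto
      moreover have "finite C" "finite D" "finite X" using CS DS XS finS finite_subset by blast+
      moreover have "C \<inter> D = {}" "(C \<union> D) \<inter> X = {}" unfolding C_def D_def by auto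
      ultimately show ?thesis by (simp add: card_Un_disjoint)
    qed
    have "2 * k * (al C + al D) \<le> 2 * k * al S" using alsplit kpos by simp
    then have "real (card S) - 2 * k * al S \<le> (real (card C) - 2 * k * al C) + (real (card D) - 2 * k * al D) + real (card X)"
      using cardS by (simp add: algebra_simps)
    then show False using phC phD phiS Xk by linarith
  qed
  ultimately show ?thesis unfolding induced_k_connected_def k_def[symmetric] using SV by blast
qed

end
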